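(* In the message-passing model (already with $k=2$ sites), without edge duplication, any randomized protocol that decides with error probability at most $1/3$ on every input whether the graph $G$ (with $n$ vertices and $m$ edges) contains a cycle uses $\Omega(\min\{m,n\})$ bits of communication.
   Context: Message-passing model: $k$ sites $P_1,\dots,P_k$, each holding a private input; two-way point-to-point channels between every pair of sites; at the end some site outputs the answer; cost is total bits exchanged. Graph setting: $G=(V,E)$ is an undirected graph with $|V|=n$, $|E|=m$; each site $P_i$ holds a subgraph $G_i\subseteq G$ on the common vertex set, and $G$ is the union of the $G_i$. "Without edge duplication" means the edge sets of the $G_i$ are pairwise disjoint. $R^{\delta}(g)$ denotes the minimum, over randomized protocols that on every input output $g$ correctly with probability at least $1-\delta$, of the maximum communication over all inputs and random choices. *)

theory Defs
  imports "HOL-Probability.Probability"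
begin

text \<open>A node owned by site 1 (resp. site 2) sends one bit computed from that site's
  private input; the history is encoded by the position in the tree.\<close>
datatype ('a, 'b) proto =
    Out bool
  | Send1 "'a \<Rightarrow> bool" "('a, 'b) proto" "('a, 'b) proto"
  | Send2 "'b \<Rightarrow> bool" "('a, 'b) proto" "('a, 'b) proto"

fun run :: "('a, 'b) proto \<Rightarrow> 'a \<Rightarrow> 'b \<Rightarrow> bool" where
  "run (Out r) x y = r"
| "run (Send1 f p0 p1) x y = (if f x then run p1 x y else run p0 x y)"
| "run (Send2 g p0 p1) x y = (if g y then run p1 x y else run p0 x y)"

fun cost :: "('a, 'b) proto \<Rightarrow> 'a \<Rightarrow> 'b \<Rightarrow> nat" where
  "cost (Out r) x y = 0"
| "cost (Send1 f p0 p1) x y = Suc (if f x then cost p1 x y else cost p0 x y)"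
| "cost (Send2 g p0 p1) x y = Suc (if g y then cost p1 x y else cost p0 x y)"

definition edges_on :: "nat \<Rightarrow> nat set set" where
  "edges_on n = {{u, v} | u v. u \<noteq> v \<and> u < n \<and> v < n}"

definition has_cycle :: "nat set set \<Rightarrow> bool" where
  "has_cycle E \<longleftrightarrow> (\<exists>vs. 3 \<le> length vs \<and> distinct vs \<and>
     (\<forall>i < length vs. {vs ! i, vs ! ((i + 1) mod length vs)} \<in> E))"

text \<open>Valid inputs: site 1 holds E1, site 2 holds E2, edge-disjoint (no edge
  duplication), graph on n vertices with at most m edges.\<close>
definition valid_input :: "nat \<Rightarrow> nat \<Rightarrow> nat set set \<Rightarrow> nat set set \<Rightarrow> bool" where
  "valid_input n m E1 E2 \<longleftrightarrow> E1 \<subseteq> edges_on n \<and> E2 \<subseteq> edges_on n \<and>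
     E1 \<inter> E2 = {} \<and> card (E1 \<union> E2) \<le> m"

text \<open>A (public-coin) randomized protocol is a distribution over deterministic
  protocols; it decides cycle-freeness with error at most delta on every valid input.\<close>
definition decides_cycle :: "nat \<Rightarrow> nat \<Rightarrow> real \<Rightarrow> (nat set set, nat set set) proto pmf \<Rightarrow> bool" where
  "decides_cycle n m \<delta> P \<longleftrightarrow> (\<forall>E1 E2. valid_input n m E1 E2 \<longrightarrow>
     measure_pmf.prob P {p. run p E1 E2 = has_cycle (E1 \<union> E2)} \<ge> 1 - \<delta>)"

end

theory Submission
  imports Defs
begin


lemma acyclic_rank:
  assumes H: "\<And>a b. {a,b} \<in> E \<Longrightarrow> a \<noteq> b \<Longrightarrow> (r a :: nat) \<noteq> r b \<and> (r a < r b \<longrightarrow> a = par b)"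
  shows "\<not> has_cycle E"
proof
  assume "has_cycle E"
  then obtain vs where L: "3 \<le> length vs" and D: "distinct vs"
    and C: "\<forall>i < length vs. {vs ! i, vs ! ((i + 1) mod length vs)} \<in> E"
    unfolding has_cycle_def by blast
  define l where "l = length vs"
  have "finite (r ` set vs)" "r ` set vs \<noteq> {}" using L by auto
  then have "Max (r ` set vs) \<in> r ` set vs" by (rule Max_in)
  then obtain j where j: "j < l" "r (vs!j) = Max (r ` set vs)"
    by (auto simp: in_set_conv_nth l_def)
  have mx: "\<And>i. i < l \<Longrightarrow> r (vs!i) \<le> r (vs!j)"
    using j by (simp add: l_def)
  have md: "\<And>i. i < l \<Longrightarrow> (i+1) mod l = (if i+1 = l then 0 else i+1)"
    by auto
  define a where "a = (if j+1 = l then 0 else j+1)"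
  define b where "b = (if j = 0 then l - 1 else j - 1)"
  have al: "a < l" "b < l" using L j(1) by (auto simp: a_def b_def l_def)
  have bj: "(b+1) mod l = j" using L j(1) md[OF al(2)] unfolding b_def l_def by auto
  have aj: "a \<noteq> j" "b \<noteq> j" "a \<noteq> b" using L j(1) unfolding a_def b_def l_def
    by auto
  have e1: "{vs!j, vs!a} \<in> E" using C j(1) md[OF j(1)] unfolding a_def l_def by auto
  have e2: "{vs!b, vs!j} \<in> E" using C al(2) bj unfolding l_def by metis
  have n1: "vs!a \<noteq> vs!j" "vs!b \<noteq> vs!j" "vs!a \<noteq> vs!b"
    using D aj al j(1) by (auto simp: nth_eq_iff_index_eq l_def)
  have "r (vs!a) < r (vs!j)" using H[of "vs!a" "vs!j"] e1 n1 mx al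
    by (metis insert_commute order_le_less)
  then have "vs!a = par (vs!j)" using H[of "vs!a" "vs!j"] e1 n1 by (metis insert_commute)
  moreover have "r (vs!b) < r (vs!j)" using H[of "vs!b" "vs!j"] e2 n1 mx al
    by (metis order_le_less)
  then have "vs!b = par (vs!j)" using H[of "vs!b" "vs!j"] e2 n1 by metis
  ultimately show False using n1 by simp
qed

definition pathE :: "nat set set \<Rightarrow> nat set \<Rightarrow> nat list \<Rightarrow> bool" where
  "pathE E S ps \<longleftrightarrow> distinct ps \<and> set ps \<subseteq> S \<and> (\<forall>i. Suc i < length ps \<longrightarrow> {ps!i, ps!Suc i} \<in> E)"

lemma mindeg_cycle:
  assumes fin: "finite S" and v0: "v0 \<in> S"
    and deg: "\<And>v. v \<in> S \<Longrightarrow> \<exists>a b. a \<in> S \<and> b \<in> S \<and> a \<noteq> b \<and> a \<noteq> v \<and> b \<noteq> v \<and> {v,a} \<in> E \<and> {v,b} \<in> E"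
  shows "has_cycle E"
proof -
  define P where "P = (\<lambda>l. \<exists>ps. pathE E S ps \<and> length ps = l)"
  have P1: "P 1" unfolding P_def pathE_def using v0 by (intro exI[of _ "[v0]"]) auto
  have bnd: "\<forall>y. P y \<longrightarrow> y \<le> card S"
  proof (intro allI impI)
    fix y assume "P y"
    then obtain ps where "pathE E S ps" "length ps = y" unfolding P_def by blast
    then show "y \<le> card S" using fin unfolding pathE_def
      by (metis card_mono distinct_card)
  qed
  obtain L where PL: "P L" and mxL: "\<forall>y. P y \<longrightarrow> y \<le> L"
    using Nat.ex_has_greatest_nat[OF P1 bnd] by blast
  obtain ps where ps: "pathE E S ps" "length ps = L" using PL unfolding P_def by blast
  have L1: "L \<ge> 1" using P1 mxL by auto
  define v where "v = ps!0"
  have vS: "v \<in> S" using ps L1 unfolding pathE_def v_def by (metis One_nat_def Suc_le_eq in_mono nth_mem)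
  obtain a b where ab: "a \<in> S" "b \<in> S" "a \<noteq> b" "a \<noteq> v" "b \<noteq> v" "{v,a} \<in> E" "{v,b} \<in> E"
    using deg[OF vS] by blast
  obtain w where w: "w \<in> S" "w \<noteq> v" "{v,w} \<in> E" "L \<ge> 2 \<longrightarrow> w \<noteq> ps!1"
    using ab by metis
  show ?thesis
  proof (cases "w \<in> set ps")
    case False
    have "pathE E S (w # ps)"
      using ps w False unfolding pathE_def v_def
      apply (auto simp: nth_Cons split: nat.splits)
      apply (metis insert_commute)+
      done
    then have "P (Suc L)" unfolding P_def using ps by (intro exI[of _ "w#ps"]) auto
    then show ?thesis using mxL by fastforce
  next
    case True
    then obtain j where j: "j < L" "ps!j = w" using ps by (auto simp: in_set_conv_nth)
    have j0: "j \<noteq> 0" using j w(2) v_def by metis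
    have j1: "j \<noteq> 1"
    proof
      assume "j = 1" then have "L \<ge> 2" using j by simp
      then show False using w(4) j \<open>j = 1\<close> by simp
    qed
    define vs where "vs = take (j+1) ps"
    have lv: "length vs = j+1" using j ps by (simp add: vs_def)
    show ?thesis unfolding has_cycle_def
    proof (intro exI[of _ vs] conjI allI impI)
      show "3 \<le> length vs" using lv j0 j1 by simp
      show "distinct vs" using ps unfolding vs_def pathE_def by simp
      fix i assume i: "i < length vs"
      show "{vs ! i, vs ! ((i + 1) mod length vs)} \<in> E"
      proof (cases "i = j")
        case True
        then show ?thesis using lv w j unfolding vs_def v_def by (simp add: insert_commute)
      next
        case False
        then have "i < j" using i lv by simp
        then show ?thesis using lv ps j unfolding vs_def pathE_def by auto
      qed
    qed
  qed
qed




definition vert :: "nat \<Rightarrow> nat \<Rightarrow> nat" where "vert i c = 4*i + c"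

lemma vert_div[simp]: "c < 4 \<Longrightarrow> vert i c div 4 = i" and vert_mod[simp]: "c < 4 \<Longrightarrow> vert i c mod 4 = c"
  and vert_odd[simp]: "odd (vert i c) \<longleftrightarrow> odd c"
  unfolding vert_def by auto

lemma vert_eq[simp]: "c < 4 \<Longrightarrow> d < 4 \<Longrightarrow> vert i c = vert j d \<longleftrightarrow> i = j \<and> c = d"
proof
  assume cd: "c < 4" "d < 4" and h: "vert i c = vert j d"
  then have "vert i c div 4 = vert j d div 4" "vert i c mod 4 = vert j d mod 4" by simp_all
  then show "i = j \<and> c = d" using cd by simp
qed simp

definition EA :: "nat \<Rightarrow> nat set \<Rightarrow> nat set set" where
  "EA k x = insert {vert 0 0, vert k 0} (\<Union>i\<in>{..<k}. if i \<in> x then {{vert i 0, vert i 2}, {vert i 1, vert i 3}} else {{vert i 0, vert (Suc i) 0}, {vert i 1, vert (Suc i) 1}})"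

definition EB :: "nat \<Rightarrow> nat set \<Rightarrow> nat set set" where
  "EB k y = (\<Union>i\<in>{..<k}. if i \<in> y then {{vert i 2, vert (Suc i) 1}, {vert i 3, vert (Suc i) 0}} else {{vert i 2, vert (Suc i) 0}, {vert i 3, vert (Suc i) 1}})"

fun cc :: "nat set \<Rightarrow> nat set \<Rightarrow> nat \<Rightarrow> bool" where
  "cc x y 0 = False"
| "cc x y (Suc i) = (cc x y i \<noteq> (i \<in> x \<and> i \<in> y))"

lemma cc_card: "cc x y k = odd (card (x \<inter> y \<inter> {..<k}))"
proof (induction k)
  case 0 then show ?case by simp
next
  case (Suc k)
  have "x \<inter> y \<inter> {..<Suc k} = (if k \<in> x \<and> k \<in> y then insert k (x \<inter> y \<inter> {..<k}) else x \<inter> y \<inter> {..<k})"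
    by (auto simp: less_Suc_eq)
  then show ?case using Suc by auto
qed

section \<open>cycle direction\<close>

lemma EA_mem:
  "i < k \<Longrightarrow> i \<in> x \<Longrightarrow> {vert i 0, vert i 2} \<in> EA k x"
  "i < k \<Longrightarrow> i \<in> x \<Longrightarrow> {vert i 1, vert i 3} \<in> EA k x"
  "i < k \<Longrightarrow> i \<notin> x \<Longrightarrow> {vert i 0, vert (Suc i) 0} \<in> EA k x"
  "i < k \<Longrightarrow> i \<notin> x \<Longrightarrow> {vert i 1, vert (Suc i) 1} \<in> EA k x"
  "{vert 0 0, vert k 0} \<in> EA k x"
  unfolding EA_def by (auto intro!: bexI[of _ i])

lemma EB_mem:
  "i < k \<Longrightarrow> i \<in> y \<Longrightarrow> {vert i 2, vert (Suc i) 1} \<in> EB k y"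
  "i < k \<Longrightarrow> i \<in> y \<Longrightarrow> {vert i 3, vert (Suc i) 0} \<in> EB k y"
  "i < k \<Longrightarrow> i \<notin> y \<Longrightarrow> {vert i 2, vert (Suc i) 0} \<in> EB k y"
  "i < k \<Longrightarrow> i \<notin> y \<Longrightarrow> {vert i 3, vert (Suc i) 1} \<in> EB k y"
  unfolding EB_def by (auto intro!: bexI[of _ i])

lemma cycle_dir:
  assumes k2: "k \<ge> 2" and ck: "\<not> cc x y k"
  shows "has_cycle (EA k x \<union> EB k y)"
proof -
  define E where "E = EA k x \<union> EB k y"
  define vp where "vp = (\<lambda>i. vert i (if cc x y i then 1 else 0))"
  define wp where "wp = (\<lambda>i. vert i (if cc x y i then 3 else 2))"
  define nx where "nx = (\<lambda>i. if i \<in> x then wp i else vp (Suc i))"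
  define pv where "pv = (\<lambda>i. if i \<in> x then wp i else vp i)"
  define S where "S = vp ` {..k} \<union> wp ` {i. i < k \<and> i \<in> x}"
  have e_nx: "\<And>i. i < k \<Longrightarrow> {vp i, nx i} \<in> E"
    unfolding E_def nx_def vp_def wp_def
    by (auto simp: EA_mem[simplified])
  have e_w: "\<And>i. i < k \<Longrightarrow> i \<in> x \<Longrightarrow> {wp i, vp (Suc i)} \<in> E"
    unfolding E_def vp_def wp_def
    by (auto simp: EB_mem[simplified])
  have e_pv: "\<And>i. i < k \<Longrightarrow> {vp (Suc i), pv i} \<in> E"
  proof -
    fix i assume i: "i < k"
    show "{vp (Suc i), pv i} \<in> E"
    proof (cases "i \<in> x")
      case True then show ?thesis using e_w[OF i] unfolding pv_def by (simp add: insert_commute)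
    next
      case False then show ?thesis using e_nx[OF i] unfolding pv_def nx_def by (simp add: insert_commute)
    qed
  qed
  have vk: "vp k = vert k 0" using ck by (simp add: vp_def)
  have v0: "vp 0 = vert 0 0" by (simp add: vp_def)
  have e_close: "{vp 0, vp k} \<in> E" unfolding v0 vk E_def by (simp add: EA_mem)
  show ?thesis unfolding E_def[symmetric]
  proof (rule mindeg_cycle[of S "vp 0"])
    show "finite S" unfolding S_def by auto
    show "vp 0 \<in> S" unfolding S_def by auto
    fix v assume "v \<in> S"
    then consider (a) i where "i \<le> k" "v = vp i" | (b) i where "i < k" "i \<in> x" "v = wp i"
      unfolding S_def by auto
    then show "\<exists>a b. a \<in> S \<and> b \<in> S \<and> a \<noteq> b \<and> a \<noteq> v \<and> b \<noteq> v \<and> {v,a} \<in> E \<and> {v,b} \<in> E"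
    proof cases
      case (b i)
      show ?thesis
      proof (intro exI conjI)
        show "vp i \<in> S" "vp (Suc i) \<in> S" using b unfolding S_def by auto
        show "vp i \<noteq> vp (Suc i)" "vp i \<noteq> v" "vp (Suc i) \<noteq> v" using b unfolding vp_def wp_def vert_def by auto
        show "{v, vp i} \<in> E" using e_nx[of i] b unfolding nx_def by (simp add: insert_commute)
        show "{v, vp (Suc i)} \<in> E" using e_w[of i] b by simp
      qed
    next
      case (a i)
      have nxS: "\<And>i. i < k \<Longrightarrow> nx i \<in> S" unfolding nx_def S_def by auto
      have pvS: "\<And>i. i < k \<Longrightarrow> pv i \<in> S" unfolding pv_def S_def by auto
      have nxL: "\<And>i. 4*i+2 \<le> nx i \<and> nx i \<le> 4*i+5" unfolding nx_def vp_def wp_def vert_def by auto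
      have pvL: "\<And>i. 4*i \<le> pv i \<and> pv i \<le> 4*i+3" unfolding pv_def vp_def wp_def vert_def by auto
      have vpL: "\<And>i. 4*i \<le> vp i \<and> vp i \<le> 4*i+1" unfolding vp_def vert_def by auto
      consider "i = 0" | "0 < i" "i < k" | "i = k" using a by linarith
      then show ?thesis
      proof cases
        case 1
        show ?thesis
        proof (intro exI conjI)
          show "vp k \<in> S" "nx 0 \<in> S" using nxS k2 unfolding S_def by auto
          show "vp k \<noteq> nx 0" "vp k \<noteq> v" "nx 0 \<noteq> v" using 1 a nxL[of 0] vk k2 v0 unfolding vert_def by auto
          show "{v, vp k} \<in> E" using e_close 1 a by (simp add: insert_commute)
          show "{v, nx 0} \<in> E" using e_nx[of 0] 1 a k2 by simp
        qed
      next
        case 2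
        then obtain j where j: "i = Suc j" by (cases i) auto
        show ?thesis
        proof (intro exI conjI)
          show "pv j \<in> S" "nx i \<in> S" using nxS pvS 2 j by auto
          show "pv j \<noteq> nx i" "pv j \<noteq> v" "nx i \<noteq> v" using a j nxL[of i] pvL[of j] vpL[of i] by auto
          show "{v, pv j} \<in> E" using e_pv[of j] a j 2 by simp
          show "{v, nx i} \<in> E" using e_nx[of i] a 2 by simp
        qed
      next
        case 3
        then obtain j where j: "k = Suc j" using k2 by (cases k) auto
        show ?thesis
        proof (intro exI conjI)
          show "pv j \<in> S" "vp 0 \<in> S" using pvS j unfolding S_def by auto
          show "pv j \<noteq> vp 0" "pv j \<noteq> v" "vp 0 \<noteq> v" using a j 3 pvL[of j] vk v0 k2 unfolding vert_def by auto
          show "{v, pv j} \<in> E" using e_pv[of j] a j 3 by simp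
          show "{v, vp 0} \<in> E" using e_close a 3 by (simp add: insert_commute)
        qed
      qed
    qed
  qed
qed

section \<open>acyclic direction\<close>

definition rk :: "nat \<Rightarrow> nat set \<Rightarrow> nat set \<Rightarrow> nat \<Rightarrow> nat" where
  "rk k x y v = (let i = v div 4; c = v mod 4; R = 3*k+3 in
    if 2 \<le> c \<and> i \<notin> x then 2*R + 4*i + c
    else if odd c = cc x y i then (if 2 \<le> c then 3*i+1 else 3*i)
    else (if 2 \<le> c then R + 3*(k-i) + 1 else R + 3*(k-i) + 2))"

definition pr :: "nat \<Rightarrow> nat set \<Rightarrow> nat set \<Rightarrow> nat \<Rightarrow> nat" where
  "pr k x y v = (let i = v div 4; c = v mod 4 in
    if 2 \<le> c \<and> i \<notin> x then vert (Suc i) (if odd c \<noteq> (i\<in>y) then 1 else 0)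
    else if odd c = cc x y i then
      (if 2 \<le> c then vert i (c - 2)
       else if (i-1) \<in> x then vert (i-1) (if cc x y (i-1) then 3 else 2) else vert (i-1) c)
    else (if 2 \<le> c then vert (Suc i) (if cc x y (Suc i) then 0 else 1)
       else if i = k then vert 0 0 else if i \<in> x then vert i (c+2) else vert (Suc i) c))"

definition HH :: "nat \<Rightarrow> nat set \<Rightarrow> nat set \<Rightarrow> nat \<Rightarrow> nat \<Rightarrow> bool" where
  "HH k x y a b \<longleftrightarrow> rk k x y a \<noteq> rk k x y b \<and> (rk k x y a < rk k x y b \<longrightarrow> a = pr k x y b)"

lemma HH_close: "k \<ge> 2 \<Longrightarrow> cc x y k \<Longrightarrow> HH k x y (vert 0 0) (vert k 0) \<and> HH k x y (vert k 0) (vert 0 0)"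
  by (simp add: HH_def rk_def pr_def Let_def)

lemma HH_A1: "i < k \<Longrightarrow> i \<in> x \<Longrightarrow> HH k x y (vert i 0) (vert i 2) \<and> HH k x y (vert i 2) (vert i 0)"
  by (cases "cc x y i"; simp add: HH_def rk_def pr_def Let_def; arith)

lemma HH_A2: "i < k \<Longrightarrow> i \<in> x \<Longrightarrow> HH k x y (vert i 1) (vert i 3) \<and> HH k x y (vert i 3) (vert i 1)"
  by (cases "cc x y i"; simp add: HH_def rk_def pr_def Let_def; arith)

lemma HH_A3: "i < k \<Longrightarrow> i \<notin> x \<Longrightarrow> HH k x y (vert i 0) (vert (Suc i) 0) \<and> HH k x y (vert (Suc i) 0) (vert i 0)"
  by (cases "cc x y i"; simp add: HH_def rk_def pr_def Let_def; arith)

lemma HH_A4: "i < k \<Longrightarrow> i \<notin> x \<Longrightarrow> HH k x y (vert i 1) (vert (Suc i) 1) \<and> HH k x y (vert (Suc i) 1) (vert i 1)"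
  by (cases "cc x y i"; simp add: HH_def rk_def pr_def Let_def; arith)

lemma HH_B1: "i < k \<Longrightarrow> i \<in> y \<Longrightarrow> HH k x y (vert i 2) (vert (Suc i) 1) \<and> HH k x y (vert (Suc i) 1) (vert i 2)"
  by (cases "cc x y i"; cases "i \<in> x"; simp add: HH_def rk_def pr_def Let_def; arith)

lemma HH_B2: "i < k \<Longrightarrow> i \<in> y \<Longrightarrow> HH k x y (vert i 3) (vert (Suc i) 0) \<and> HH k x y (vert (Suc i) 0) (vert i 3)"
  by (cases "cc x y i"; cases "i \<in> x"; simp add: HH_def rk_def pr_def Let_def; arith)

lemma HH_B3: "i < k \<Longrightarrow> i \<notin> y \<Longrightarrow> HH k x y (vert i 2) (vert (Suc i) 0) \<and> HH k x y (vert (Suc i) 0) (vert i 2)"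
  by (cases "cc x y i"; cases "i \<in> x"; simp add: HH_def rk_def pr_def Let_def; arith)

lemma HH_B4: "i < k \<Longrightarrow> i \<notin> y \<Longrightarrow> HH k x y (vert i 3) (vert (Suc i) 1) \<and> HH k x y (vert (Suc i) 1) (vert i 3)"
  by (cases "cc x y i"; cases "i \<in> x"; simp add: HH_def rk_def pr_def Let_def; arith)

lemma HH_all:
  assumes k2: "k \<ge> 2" and ck: "cc x y k" and e: "{a,b} \<in> EA k x \<union> EB k y"
  shows "HH k x y a b"
proof -
  have sw: "\<And>p q. HH k x y p q \<and> HH k x y q p \<Longrightarrow> {a,b} = {p,q} \<Longrightarrow> HH k x y a b"
    by (metis doubleton_eq_iff)
  have "{a,b} = {vert 0 0, vert k 0} \<or> (\<exists>i<k. {a,b} \<in> (if i \<in> x then {{vert i 0, vert i 2}, {vert i 1, vert i 3}} else {{vert i 0, vert (Suc i) 0}, {vert i 1, vert (Suc i) 1}}))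
     \<or> (\<exists>i<k. {a,b} \<in> (if i \<in> y then {{vert i 2, vert (Suc i) 1}, {vert i 3, vert (Suc i) 0}} else {{vert i 2, vert (Suc i) 0}, {vert i 3, vert (Suc i) 1}}))"
    using e unfolding EA_def EB_def by blast
  then show ?thesis
  proof (elim disjE exE conjE)
    assume "{a,b} = {vert 0 0, vert k 0}" then show ?thesis using sw HH_close[OF k2 ck] by blast
  next
    fix i assume i: "i < k" and m: "{a,b} \<in> (if i \<in> x then {{vert i 0, vert i 2}, {vert i 1, vert i 3}} else {{vert i 0, vert (Suc i) 0}, {vert i 1, vert (Suc i) 1}})"
    show ?thesis
    proof (cases "i \<in> x")
      case True
      then have "{a,b} = {vert i 0, vert i 2} \<or> {a,b} = {vert i 1, vert i 3}" using m by simp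
      then show ?thesis using sw HH_A1[OF i True] HH_A2[OF i True] by blast
    next
      case False
      then have "{a,b} = {vert i 0, vert (Suc i) 0} \<or> {a,b} = {vert i 1, vert (Suc i) 1}" using m by simp
      then show ?thesis using sw HH_A3[OF i False] HH_A4[OF i False] by blast
    qed
  next
    fix i assume i: "i < k" and m: "{a,b} \<in> (if i \<in> y then {{vert i 2, vert (Suc i) 1}, {vert i 3, vert (Suc i) 0}} else {{vert i 2, vert (Suc i) 0}, {vert i 3, vert (Suc i) 1}})"
    show ?thesis
    proof (cases "i \<in> y")
      case True
      then have "{a,b} = {vert i 2, vert (Suc i) 1} \<or> {a,b} = {vert i 3, vert (Suc i) 0}" using m by simp
      then show ?thesis using sw HH_B1[OF i True] HH_B2[OF i True] by blast
    next
      case False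
      then have "{a,b} = {vert i 2, vert (Suc i) 0} \<or> {a,b} = {vert i 3, vert (Suc i) 1}" using m by simp
      then show ?thesis using sw HH_B3[OF i False] HH_B4[OF i False] by blast
    qed
  qed
qed

lemma acyc_dir:
  assumes k2: "k \<ge> 2" and ck: "cc x y k"
  shows "\<not> has_cycle (EA k x \<union> EB k y)"
  by (rule acyclic_rank[where r = "rk k x y" and par = "pr k x y"])
     (use HH_all[OF k2 ck] in \<open>auto simp: HH_def\<close>)

lemma gadget:
  assumes "k \<ge> 2" "x \<subseteq> {..<k}" "y \<subseteq> {..<k}"
  shows "has_cycle (EA k x \<union> EB k y) \<longleftrightarrow> even (card (x \<inter> y))"
proof -
  have "x \<inter> y \<inter> {..<k} = x \<inter> y" using assms by auto
  then have "cc x y k \<longleftrightarrow> odd (card (x \<inter> y))" by (simp add: cc_card)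
  then show ?thesis using cycle_dir[OF assms(1)] acyc_dir[OF assms(1)] by blast
qed




lemma card_ins_int:
  assumes "finite x" "a \<notin> x"
  shows "card (insert a x \<inter> y) = card (x \<inter> y) + (if a \<in> y then 1 else 0)"
  using assms by (cases "a \<in> y") (auto simp: Int_insert_left)

lemma hadamard_orth:
  fixes y y' :: "'a set"
  assumes "finite K"
  shows "(\<Sum>x\<in>Pow K. (-1::real)^(card (x\<inter>y) + card (x\<inter>y'))) = (if K\<inter>y = K\<inter>y' then 2^card K else 0)"
  using assms
proof (induction K rule: finite_induct)
  case empty
  then show ?case by simp
next
  case (insert a K)
  define F where "F = (\<lambda>x. (-1::real)^(card (x\<inter>y) + card (x\<inter>y')))"
  have disj: "Pow K \<inter> insert a ` Pow K = {}" using insert by auto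
  have inj: "inj_on (insert a) (Pow K)" using insert unfolding inj_on_def by (metis PowD insert_ident subsetD)
  have fx: "\<And>x. x \<in> Pow K \<Longrightarrow> F (insert a x) = (if (a\<in>y) = (a\<in>y') then 1 else -1) * F x"
  proof -
    fix x assume "x \<in> Pow K"
    then have "finite x" "a \<notin> x" using insert finite_subset by auto
    then show "F (insert a x) = (if (a\<in>y) = (a\<in>y') then 1 else -1) * F x"
      unfolding F_def by (auto simp: card_ins_int power_add)
  qed
  have "(\<Sum>x\<in>Pow (insert a K). F x) = (\<Sum>x\<in>Pow K. F x) + (\<Sum>x\<in>insert a ` Pow K. F x)"
    unfolding Pow_insert using disj insert by (intro sum.union_disjoint) auto
  also have "(\<Sum>x\<in>insert a ` Pow K. F x) = (\<Sum>x\<in>Pow K. F (insert a x))"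
    using inj by (simp add: sum.reindex)
  also have "\<dots> = (if (a\<in>y) = (a\<in>y') then 1 else -1) * (\<Sum>x\<in>Pow K. F x)"
    using fx by (simp add: sum_distrib_left)
  finally have eq: "(\<Sum>x\<in>Pow (insert a K). F x) = (1 + (if (a\<in>y) = (a\<in>y') then 1 else -1)) * (\<Sum>x\<in>Pow K. F x)"
    by (simp add: algebra_simps)
  have IH: "(\<Sum>x\<in>Pow K. F x) = (if K\<inter>y = K\<inter>y' then 2^card K else 0)" using insert.IH unfolding F_def .
  have c1: "(insert a K \<inter> y = insert a K \<inter> y') \<longleftrightarrow> ((a\<in>y) = (a\<in>y') \<and> K\<inter>y = K\<inter>y')"
    using insert by blast
  show ?case unfolding F_def[symmetric] eq IH c1 using insert by auto
qed

lemma lindsey: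
  assumes fin: "finite K" and A: "A \<subseteq> Pow K" and B: "B \<subseteq> Pow K"
  shows "(\<Sum>x\<in>A. \<Sum>y\<in>B. (-1::real)^card (x\<inter>y))^2 \<le> real (card A) * real (card B) * 2^card K"
proof -
  define h :: "'a set \<Rightarrow> 'a set \<Rightarrow> real" where "h = (\<lambda>x y. (-1::real)^card (x\<inter>y))"
  have finA: "finite A" "finite B" using A B fin by (auto intro: finite_subset)
  have "(\<Sum>x\<in>A. \<Sum>y\<in>B. h x y)^2 \<le> (\<Sum>x\<in>A. (\<Sum>y\<in>B. h x y)^2) * card A"
    by (rule sum_squared_le_sum_of_squares)
  also have "(\<Sum>x\<in>A. (\<Sum>y\<in>B. h x y)^2) \<le> (\<Sum>x\<in>Pow K. (\<Sum>y\<in>B. h x y)^2)"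
    using A fin by (intro sum_mono2) auto
  also have "(\<Sum>x\<in>Pow K. (\<Sum>y\<in>B. h x y)^2) = (\<Sum>x\<in>Pow K. \<Sum>y\<in>B. \<Sum>y'\<in>B. h x y * h x y')"
    by (simp add: power2_eq_square sum_product)
  also have "\<dots> = (\<Sum>y\<in>B. \<Sum>y'\<in>B. \<Sum>x\<in>Pow K. h x y * h x y')"
  proof -
    have "(\<Sum>x\<in>Pow K. \<Sum>y\<in>B. \<Sum>y'\<in>B. h x y * h x y') = (\<Sum>y\<in>B. \<Sum>x\<in>Pow K. \<Sum>y'\<in>B. h x y * h x y')"
      by (rule sum.swap)
    also have "\<dots> = (\<Sum>y\<in>B. \<Sum>y'\<in>B. \<Sum>x\<in>Pow K. h x y * h x y')"
      by (rule sum.cong[OF refl], rule sum.swap)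
    finally show ?thesis .
  qed
  also have "\<dots> = (\<Sum>y\<in>B. \<Sum>y'\<in>B. if y = y' then 2^card K else 0)"
  proof (intro sum.cong refl)
    fix y y' assume "y \<in> B" "y' \<in> B"
    then have "K \<inter> y = y" "K \<inter> y' = y'" using B by auto
    then show "(\<Sum>x\<in>Pow K. h x y * h x y') = (if y = y' then 2^card K else 0)"
      using hadamard_orth[OF fin, of y y'] unfolding h_def by (simp add: power_add)
  qed
  also have "\<dots> = real (card B) * 2^card K" using finA by simp
  finally have "(\<Sum>x\<in>A. \<Sum>y\<in>B. h x y)^2 \<le> real (card B) * 2^card K * card A"
    by (simp add: mult_right_mono)
  then show ?thesis unfolding h_def by (simp add: algebra_simps)
qed




definition score :: "('a,'b) proto \<Rightarrow> ('x \<Rightarrow> 'a) \<Rightarrow> ('y \<Rightarrow> 'b) \<Rightarrow> ('x \<Rightarrow> 'y \<Rightarrow> bool) \<Rightarrow> 'x set \<Rightarrow> 'y set \<Rightarrow> real" where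
  "score p \<phi> \<psi> G A B = (\<Sum>x\<in>A. \<Sum>y\<in>B. (if run p (\<phi> x) (\<psi> y) = G x y then 1 else -1))"

lemma score_bound:
  assumes disc: "\<And>A B. A \<subseteq> X \<Longrightarrow> B \<subseteq> Y \<Longrightarrow> \<bar>\<Sum>x\<in>A. \<Sum>y\<in>B. (if G x y then 1 else -1::real)\<bar> \<le> D"
    and fX: "finite X" and fY: "finite Y"
  shows "A \<subseteq> X \<Longrightarrow> B \<subseteq> Y \<Longrightarrow> (\<forall>x\<in>A. \<forall>y\<in>B. cost p (\<phi> x) (\<psi> y) \<le> d) \<Longrightarrow>
     \<bar>score p \<phi> \<psi> G A B\<bar> \<le> 2^d * D"
proof (induction p arbitrary: A B d)
  case (Out r)
  have D0: "0 \<le> D" using disc[of "{}" "{}"] by simp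
  have "score (Out r) \<phi> \<psi> G A B = (if r then 1 else -1) * (\<Sum>x\<in>A. \<Sum>y\<in>B. (if G x y then 1 else -1::real))"
  proof (cases r)
    case False
    have "\<And>x y. (if (r = G x y) then 1 else -1::real) = - (if G x y then 1 else -1)" using False by auto
    then show ?thesis using False unfolding score_def by (simp add: sum_negf)
  qed (simp add: score_def)
  then have "\<bar>score (Out r) \<phi> \<psi> G A B\<bar> \<le> D" using disc[OF Out(1,2)] by (simp add: abs_mult)
  also have "D \<le> 2^d * D" using D0 mult_right_mono[of 1 "2^d" D] by simp
  finally show ?case .
next
  case (Send1 f p0 p1)
  have fA: "finite A" "finite B" using Send1.prems fX fY by (auto intro: finite_subset)
  show ?case
  proof (cases "A = {} \<or> B = {}")
    case True
    then have "score (Send1 f p0 p1) \<phi> \<psi> G A B = 0" unfolding score_def by auto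
    moreover have "0 \<le> D" using disc[of "{}" "{}"] by simp
    ultimately show ?thesis by simp
  next
    case False
    then obtain x y where xy: "x \<in> A" "y \<in> B" by blast
    then have "cost (Send1 f p0 p1) (\<phi> x) (\<psi> y) \<le> d" using Send1.prems by blast
    then obtain d' where d: "d = Suc d'" by (cases d) auto
    define A1 where "A1 = A \<inter> {x. f (\<phi> x)}"
    define A0 where "A0 = A \<inter> - {x. f (\<phi> x)}"
    have "score (Send1 f p0 p1) \<phi> \<psi> G A B = score p1 \<phi> \<psi> G A1 B + score p0 \<phi> \<psi> G A0 B"
      unfolding score_def A1_def A0_def
      by (simp add: sum.If_cases[OF fA(1), symmetric]) (rule sum.cong, auto)
    moreover have "\<bar>score p1 \<phi> \<psi> G A1 B\<bar> \<le> 2^d' * D"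
    proof (rule Send1.IH(2))
      show "A1 \<subseteq> X" "B \<subseteq> Y" using Send1.prems unfolding A1_def by auto
      show "\<forall>x\<in>A1. \<forall>y\<in>B. cost p1 (\<phi> x) (\<psi> y) \<le> d'"
        using Send1.prems(3) d unfolding A1_def by fastforce
    qed
    moreover have "\<bar>score p0 \<phi> \<psi> G A0 B\<bar> \<le> 2^d' * D"
    proof (rule Send1.IH(1))
      show "A0 \<subseteq> X" "B \<subseteq> Y" using Send1.prems unfolding A0_def by auto
      show "\<forall>x\<in>A0. \<forall>y\<in>B. cost p0 (\<phi> x) (\<psi> y) \<le> d'"
        using Send1.prems(3) d unfolding A0_def
      proof (intro ballI)
        fix x y assume "x \<in> A \<inter> - {x. f (\<phi> x)}" "y \<in> B"
        then have "x \<in> A" "\<not> f (\<phi> x)" by auto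
        then have "cost (Send1 f p0 p1) (\<phi> x) (\<psi> y) \<le> d" using Send1.prems(3) \<open>y \<in> B\<close> by blast
        then show "cost p0 (\<phi> x) (\<psi> y) \<le> d'" using \<open>\<not> f (\<phi> x)\<close> d by simp
      qed
    qed
    ultimately show ?thesis using d by simp
  qed
next
  case (Send2 g p0 p1)
  have fA: "finite A" "finite B" using Send2.prems fX fY by (auto intro: finite_subset)
  show ?case
  proof (cases "A = {} \<or> B = {}")
    case True
    then have "score (Send2 g p0 p1) \<phi> \<psi> G A B = 0" unfolding score_def by auto
    moreover have "0 \<le> D" using disc[of "{}" "{}"] by simp
    ultimately show ?thesis by simp
  next
    case False
    then obtain x y where xy: "x \<in> A" "y \<in> B" by blast
    then have "cost (Send2 g p0 p1) (\<phi> x) (\<psi> y) \<le> d" using Send2.prems by blast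
    then obtain d' where d: "d = Suc d'" by (cases d) auto
    define B1 where "B1 = B \<inter> {y. g (\<psi> y)}"
    define B0 where "B0 = B \<inter> - {y. g (\<psi> y)}"
    have "score (Send2 g p0 p1) \<phi> \<psi> G A B = (\<Sum>x\<in>A. \<Sum>y\<in>B1. (if run p1 (\<phi> x) (\<psi> y) = G x y then 1 else -1)) + (\<Sum>x\<in>A. \<Sum>y\<in>B0. (if run p0 (\<phi> x) (\<psi> y) = G x y then 1 else -1))"
      unfolding score_def B1_def B0_def sum.distrib[symmetric]
      by (rule sum.cong[OF refl]) (simp add: sum.If_cases[OF fA(2), symmetric], rule sum.cong, auto)
    also have "\<dots> = score p1 \<phi> \<psi> G A B1 + score p0 \<phi> \<psi> G A B0" unfolding score_def ..
    finally have eq: "score (Send2 g p0 p1) \<phi> \<psi> G A B = score p1 \<phi> \<psi> G A B1 + score p0 \<phi> \<psi> G A B0" .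
    moreover have "\<bar>score p1 \<phi> \<psi> G A B1\<bar> \<le> 2^d' * D"
    proof (rule Send2.IH(2))
      show "A \<subseteq> X" "B1 \<subseteq> Y" using Send2.prems unfolding B1_def by auto
      show "\<forall>x\<in>A. \<forall>y\<in>B1. cost p1 (\<phi> x) (\<psi> y) \<le> d'"
        using Send2.prems(3) d unfolding B1_def by fastforce
    qed
    moreover have "\<bar>score p0 \<phi> \<psi> G A B0\<bar> \<le> 2^d' * D"
    proof (rule Send2.IH(1))
      show "A \<subseteq> X" "B0 \<subseteq> Y" using Send2.prems unfolding B0_def by auto
      show "\<forall>x\<in>A. \<forall>y\<in>B0. cost p0 (\<phi> x) (\<psi> y) \<le> d'"
        using Send2.prems(3) d unfolding B0_def
      proof (intro ballI)
        fix x y assume "x \<in> A" "y \<in> B \<inter> - {y. g (\<psi> y)}"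
        then have "y \<in> B" "\<not> g (\<psi> y)" by auto
        then have "cost (Send2 g p0 p1) (\<phi> x) (\<psi> y) \<le> d" using Send2.prems(3) \<open>x \<in> A\<close> by blast
        then show "cost p0 (\<phi> x) (\<psi> y) \<le> d'" using \<open>\<not> g (\<psi> y)\<close> d by simp
      qed
    qed
    ultimately show ?thesis using d by simp
  qed
qed




lemma edges_onI: "u \<noteq> v \<Longrightarrow> u < n \<Longrightarrow> v < n \<Longrightarrow> {u,v} \<in> edges_on n"
  unfolding edges_on_def by blast

lemma vert_lt: "c < 4 \<Longrightarrow> i \<le> k \<Longrightarrow> 4*k + 2 \<le> n \<Longrightarrow> (i < k \<or> c < 2) \<Longrightarrow> vert i c < n"
  unfolding vert_def by auto

lemma EA_sub: "4*k+2 \<le> n \<Longrightarrow> k \<ge> 1 \<Longrightarrow> EA k x \<subseteq> edges_on n"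
  unfolding EA_def vert_def
  by (auto intro!: edges_onI split: if_splits)

lemma EB_sub: "4*k+2 \<le> n \<Longrightarrow> EB k y \<subseteq> edges_on n"
  unfolding EB_def vert_def
  by (auto intro!: edges_onI split: if_splits)

definition PB :: "nat set \<Rightarrow> bool" where
  "PB e \<longleftrightarrow> (\<exists>v\<in>e. \<exists>w\<in>e. 2 \<le> v mod 4 \<and> w div 4 = Suc (v div 4))"

lemma EB_PB: "e \<in> EB k y \<Longrightarrow> PB e"
  unfolding EB_def PB_def by (force split: if_splits)

lemma PB2: "PB {a,b} \<longleftrightarrow> (2 \<le> a mod 4 \<and> (a div 4 = Suc (a div 4) \<or> b div 4 = Suc (a div 4))) \<or> (2 \<le> b mod 4 \<and> (a div 4 = Suc (b div 4) \<or> b div 4 = Suc (b div 4)))"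
  unfolding PB_def by auto

lemma EA_PB: "k \<ge> 1 \<Longrightarrow> e \<in> EA k x \<Longrightarrow> \<not> PB e"
proof -
  assume e: "e \<in> EA k x"
  have "e = {vert 0 0, vert k 0} \<or> (\<exists>i<k. e \<in> (if i \<in> x then {{vert i 0, vert i 2}, {vert i 1, vert i 3}} else {{vert i 0, vert (Suc i) 0}, {vert i 1, vert (Suc i) 1}}))"
    using e unfolding EA_def by blast
  then show "\<not> PB e"
  proof (elim disjE exE conjE)
    assume "e = {vert 0 0, vert k 0}" then show ?thesis by (simp add: PB2)
  next
    fix i assume m: "e \<in> (if i \<in> x then {{vert i 0, vert i 2}, {vert i 1, vert i 3}} else {{vert i 0, vert (Suc i) 0}, {vert i 1, vert (Suc i) 1}})"
    show ?thesis
    proof (cases "i \<in> x")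
      case True
      then have "e = {vert i 0, vert i 2} \<or> e = {vert i 1, vert i 3}" using m by simp
      then show ?thesis by (auto simp: PB2)
    next
      case False
      then have "e = {vert i 0, vert (Suc i) 0} \<or> e = {vert i 1, vert (Suc i) 1}" using m by simp
      then show ?thesis by (auto simp: PB2)
    qed
  qed
qed

lemma card2: "card {a, b} \<le> 2"
  by (cases "a = b") auto

lemma card_ins: "card (insert a A) \<le> Suc (card A)"
  by (cases "finite A") (auto simp: card_insert_if)

lemma card_EA: "card (EA k x) \<le> 2*k + 1"
proof -
  have "card (\<Union>i\<in>{..<k}. if i \<in> x then {{vert i 0, vert i 2}, {vert i 1, vert i 3}} else {{vert i 0, vert (Suc i) 0}, {vert i 1, vert (Suc i) 1}})
     \<le> (\<Sum>i\<in>{..<k}. card (if i \<in> x then {{vert i 0, vert i 2}, {vert i 1, vert i 3}} else {{vert i 0, vert (Suc i) 0}, {vert i 1, vert (Suc i) 1}}))"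
    by (rule card_UN_le) simp
  also have "\<dots> \<le> (\<Sum>i\<in>{..<k}. 2)" by (intro sum_mono) (simp add: card2)
  also have "(\<Sum>i\<in>{..<k}. 2::nat) = 2*k" by simp
  finally show ?thesis unfolding EA_def using card_ins le_trans by fastforce
qed

lemma card_EB: "card (EB k y) \<le> 2*k"
proof -
  have "card (EB k y) \<le> (\<Sum>i\<in>{..<k}. card (if i \<in> y then {{vert i 2, vert (Suc i) 1}, {vert i 3, vert (Suc i) 0}} else {{vert i 2, vert (Suc i) 0}, {vert i 3, vert (Suc i) 1}}))"
    unfolding EB_def by (rule card_UN_le) simp
  also have "\<dots> \<le> (\<Sum>i\<in>{..<k}. 2)" by (intro sum_mono) (simp add: card2)
  finally show ?thesis by simp
qed

lemma valid_gadget: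
  assumes "4*k+2 \<le> n" "4*k+2 \<le> m" "k \<ge> 1"
  shows "valid_input n m (EA k x) (EB k y)"
  unfolding valid_input_def
proof (intro conjI)
  show "EA k x \<subseteq> edges_on n" using EA_sub assms by blast
  show "EB k y \<subseteq> edges_on n" using EB_sub assms by blast
  show "EA k x \<inter> EB k y = {}" using EA_PB EB_PB assms(3) by blast
  have "card (EA k x \<union> EB k y) \<le> card (EA k x) + card (EB k y)" by (rule card_Un_le)
  then show "card (EA k x \<union> EB k y) \<le> m" using card_EA[of k x] card_EB[of k y] assms by linarith
qed




lemma intb: "(\<And>p. \<bar>f p\<bar> \<le> B) \<Longrightarrow> integrable (measure_pmf P) (f::_\<Rightarrow>real)"
  by (rule measure_pmf.integrable_const_bound[where B=B]) auto

lemma exp_pm1: "measure_pmf.expectation P (\<lambda>p. if p \<in> S then 1 else -1::real) = 2 * measure_pmf.prob P S - 1"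
proof -
  have eq: "(\<lambda>p. if p \<in> S then 1 else -1::real) = (\<lambda>p. 2 * indicator S p - 1)" by (auto simp: indicator_def)
  have i: "integrable (measure_pmf P) (\<lambda>p. 2 * indicator S p :: real)" by (rule intb[where B=2]) (auto simp: indicator_def)
  show ?thesis unfolding eq
    by (subst Bochner_Integration.integral_diff[OF i]) (auto simp: measure_pmf.prob_space)
qed

lemma arith_k:
  fixes M :: nat assumes "100 \<le> M"
  shows "4*((M-2) div 4) + 2 \<le> M" "(M-2) div 4 \<ge> 2" "2*(M div 100) + 4 \<le> (M-2) div 4"
proof -
  define q where "q = (M-2) div 4"
  define d where "d = M div 100"
  have q1: "4*q \<le> M-2" "M - 2 < 4*q + 4" unfolding q_def by linarith+
  have d1: "100*d \<le> M" unfolding d_def by linarith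
  show "4*((M-2) div 4) + 2 \<le> M" "(M-2) div 4 \<ge> 2" "2*(M div 100) + 4 \<le> (M-2) div 4"
    using q1 d1 assms unfolding q_def[symmetric] d_def[symmetric] by linarith+
qed

theorem corollary6p2:
  shows "\<exists>c::real. c > 0 \<and> (\<exists>N::nat. \<forall>n m P.
     N \<le> min m n \<longrightarrow> decides_cycle n m (1/3) P \<longrightarrow>
     (\<exists>p \<in> set_pmf P. \<exists>E1 E2. valid_input n m E1 E2 \<and>
        real (cost p E1 E2) \<ge> c * real (min m n)))"
proof (intro exI[of _ "1/100"] conjI)
  show "(1/100::real) > 0" by simp
  show "\<exists>N::nat. \<forall>n m P.
     N \<le> min m n \<longrightarrow> decides_cycle n m (1/3) P \<longrightarrow>
     (\<exists>p \<in> set_pmf P. \<exists>E1 E2. valid_input n m E1 E2 \<and>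
        real (cost p E1 E2) \<ge> 1/100 * real (min m n))"
  proof (intro exI[of _ 100] allI impI)
    fix n m :: nat and P assume NM: "100 \<le> min m n" and dec: "decides_cycle n m (1/3) P"
    define M where "M = min m n"
    define k where "k = (M - 2) div 4"
    define d where "d = M div 100"
    have k: "4*k+2 \<le> n" "4*k+2 \<le> m" "k \<ge> 2" "2*d + 4 \<le> k"
      using arith_k[of M] NM unfolding k_def d_def M_def by auto
    show "\<exists>p \<in> set_pmf P. \<exists>E1 E2. valid_input n m E1 E2 \<and> real (cost p E1 E2) \<ge> 1/100 * real (min m n)"
    proof (rule ccontr)
      assume neg: "\<not> ?thesis"
      define X where "X = Pow {..<k}"
      define G where "G = (\<lambda>x y::nat set. even (card (x \<inter> y)))"
      have finX: "finite X" unfolding X_def by simp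
      have cardX: "card X = 2^k" unfolding X_def by (simp add: card_Pow)
      have valid: "\<And>x y. valid_input n m (EA k x) (EB k y)"
        using valid_gadget k by simp
      have hasG: "\<And>x y. x \<in> X \<Longrightarrow> y \<in> X \<Longrightarrow> has_cycle (EA k x \<union> EB k y) = G x y"
        unfolding X_def G_def using gadget k(3) by auto
      have costd: "\<And>p x y. p \<in> set_pmf P \<Longrightarrow> cost p (EA k x) (EB k y) \<le> d"
      proof -
        fix p x y assume p: "p \<in> set_pmf P"
        then have "real (cost p (EA k x) (EB k y)) < 1/100 * real M"
          using neg valid[of x y] unfolding M_def by force
        then have "cost p (EA k x) (EB k y) * 100 < M" by linarith
        then show "cost p (EA k x) (EB k y) \<le> d" unfolding d_def
          using div_le_mono[of "cost p (EA k x) (EB k y) * 100" M 100] by simp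
      qed
      have disc: "\<And>A B. A \<subseteq> X \<Longrightarrow> B \<subseteq> X \<Longrightarrow> \<bar>\<Sum>x\<in>A. \<Sum>y\<in>B. (if G x y then 1 else -1::real)\<bar> \<le> sqrt (8^k)"
      proof -
        fix A B assume A: "A \<subseteq> X" and B: "B \<subseteq> X"
        have "(\<Sum>x\<in>A. \<Sum>y\<in>B. (if G x y then 1 else -1::real)) = (\<Sum>x\<in>A. \<Sum>y\<in>B. (-1::real)^card (x\<inter>y))"
          unfolding G_def by (intro sum.cong refl) (simp add: neg_one_even_power neg_one_odd_power)
        also have "\<dots>^2 \<le> real (card A) * real (card B) * 2^card {..<k}"
          using lindsey[of "{..<k}" A B] A B unfolding X_def by simp
        also have "\<dots> \<le> 2^k * 2^k * 2^k"
        proof -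
          have "card A \<le> 2^k" "card B \<le> 2^k" using A B finX cardX by (metis card_mono)+
          then show ?thesis by (simp add: mult_mono)
        qed
        also have "\<dots> = 8^k"
        proof -
          have "(8::real) = 2*2*2" by simp
          then have "(8::real)^k = (2*2*2)^k" by simp
          then show ?thesis by (simp only: power_mult_distrib)
        qed
        finally have sq: "(\<Sum>x\<in>A. \<Sum>y\<in>B. (if G x y then 1 else -1::real))^2 \<le> 8^k" .
        show "\<bar>\<Sum>x\<in>A. \<Sum>y\<in>B. (if G x y then 1 else -1::real)\<bar> \<le> sqrt (8^k)"
          by (rule real_le_rsqrt) (use sq in simp)
      qed
      define sc where "sc = (\<lambda>p. score p (EA k) (EB k) G X X)"
      have sb: "\<And>p. p \<in> set_pmf P \<Longrightarrow> sc p \<le> 2^d * sqrt (8^k)"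
      proof -
        fix p assume p: "p \<in> set_pmf P"
        have "\<bar>sc p\<bar> \<le> 2^d * sqrt (8^k)" unfolding sc_def
          by (rule score_bound[OF disc finX finX]) (use costd[OF p] in auto)
        then show "sc p \<le> 2^d * sqrt (8^k)" by simp
      qed
      have intt: "\<And>x y. integrable (measure_pmf P) (\<lambda>p. if run p (EA k x) (EB k y) = G x y then 1 else -1::real)"
        by (rule intb[where B=1]) auto
      have "measure_pmf.expectation P sc = (\<Sum>x\<in>X. \<Sum>y\<in>X. measure_pmf.expectation P (\<lambda>p. if run p (EA k x) (EB k y) = G x y then 1 else -1::real))"
        unfolding sc_def score_def
        by (simp add: Bochner_Integration.integral_sum intt Bochner_Integration.integrable_sum)
      also have "\<dots> \<ge> (\<Sum>x\<in>X. \<Sum>y\<in>X. 1/3)"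
      proof (intro sum_mono)
        fix x y assume x: "x \<in> X" and y: "y \<in> X"
        have "measure_pmf.expectation P (\<lambda>p. if run p (EA k x) (EB k y) = G x y then 1 else -1::real)
           = 2 * measure_pmf.prob P {p. run p (EA k x) (EB k y) = G x y} - 1"
          using exp_pm1[of P "{p. run p (EA k x) (EB k y) = G x y}"] by simp
        moreover have "measure_pmf.prob P {p. run p (EA k x) (EB k y) = G x y} \<ge> 2/3"
        proof -
          have "measure_pmf.prob P {p. run p (EA k x) (EB k y) = has_cycle (EA k x \<union> EB k y)} \<ge> 1 - 1/3"
            using dec valid[of x y] unfolding decides_cycle_def by blast
          then show ?thesis unfolding hasG[OF x y] by simp
        qed
        ultimately show "1/3 \<le> measure_pmf.expectation P (\<lambda>p. if run p (EA k x) (EB k y) = G x y then 1 else -1::real)"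
          by simp
      qed
      finally have lo: "(2^k * 2^k)/3 \<le> measure_pmf.expectation P sc" using cardX by simp
      have insc: "integrable (measure_pmf P) sc"
        unfolding sc_def score_def by (simp add: intt Bochner_Integration.integrable_sum)
      have hi: "measure_pmf.expectation P sc \<le> 2^d * sqrt (8^k)"
        by (rule measure_pmf.integral_le_const[OF insc]) (use sb in \<open>auto simp: AE_measure_pmf_iff\<close>)
      have main: "(2^k * 2^k)/3 \<le> (2::real)^d * sqrt (8^k)" using lo hi by linarith
      have "((2^k * 2^k)/3)^2 \<le> ((2::real)^d * sqrt (8^k))^2"
        by (rule power_mono[OF main]) simp
      moreover have "((2^k * 2^k)/3)^2 = (2::real)^k * 8^k / 9"
      proof -
        have "(8::real) = 2*2*2" by simp
        then have e8: "(8::real)^k = 2^k*2^k*2^k" by (simp only: power_mult_distrib)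
        show ?thesis unfolding e8 by (simp add: power2_eq_square)
      qed
      moreover have "((2::real)^d * sqrt (8^k))^2 = 4^d * 8^k"
      proof -
        have a1: "(2::real)^(2*d) = (2^2)^d" by (rule power_mult)
        have a2: "(2::real)^(d*2) = (2^d)^2" by (rule power_mult)
        have "((2::real)^d)^2 = 4^d" using a1 a2 by (simp add: mult.commute)
        then show ?thesis by (simp add: power_mult_distrib)
      qed
      ultimately have "(2::real)^k * 8^k / 9 \<le> 4^d * 8^k" by simp
      then have "(2::real)^k \<le> 9 * 4^d" by (simp add: field_simps)
      moreover have "(2::real)^(2*d+4) \<le> 2^k" by (rule power_increasing) (use k in auto)
      moreover have "(2::real)^(2*d+4) = 16 * 4^d" by (simp add: power_add power_mult)
      moreover have "(0::real) < 4^d" by simp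
      ultimately show False by linarith
    qed
  qed
qed


end
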